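(* For $w>0$, the graphic generating function of directed acyclic graphs satisfies, as an identity of formal power series in $z$, \[u\,\partial_u \mathrm{DAG}(z,w,u)=u z\,\mathrm{DAG}\!\left(\frac{z}{1+w},w,u\right)\mathrm{DAG}\!\left(z,w,\frac{w}{1+w}\right).\]
   Context: For a labelled DAG $G$ (directed acyclic graph on vertex set $\{1,\dots,n\}$, $n\ge0$), $v(G)$, $e(G)$, $s(G)$ denote its numbers of vertices, edges, and sources (vertices of in-degree $0$). $\mathrm{DAG}(z,w,u)=\sum_G \frac{z^{v(G)}w^{e(G)}u^{s(G)}}{(1+w)^{\binom{v(G)}{2}}v(G)!}$, the sum over all labelled DAGs. (It is known that $\mathrm{DAG}(z,w,u)=\mathrm{Set}((u-1)z,w)/\mathrm{Set}(-z,w)$ with $\mathrm{Set}(z,w)=\sum_{n\ge0}\frac{z^n}{(1+w)^{\binom n2}n!}$.) *)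

theory Defs
  imports "HOL-Analysis.Analysis" "HOL-Computational_Algebra.Formal_Power_Series"
begin

definition dags :: "nat \<Rightarrow> (nat \<times> nat) set set" where
  "dags n = {E. E \<subseteq> {1..n} \<times> {1..n} \<and> acyclic E}"

definition sources :: "nat \<Rightarrow> (nat \<times> nat) set \<Rightarrow> nat set" where
  "sources n E = {v \<in> {1..n}. \<forall>x. (x, v) \<notin> E}"

definition dag_coeff :: "nat \<Rightarrow> real \<Rightarrow> real \<Rightarrow> real" where
  "dag_coeff n w u =
     (\<Sum>E\<in>dags n. w ^ card E * u ^ card (sources n E))
       / ((1 + w) ^ (n choose 2) * fact n)"

definition DAG :: "real \<Rightarrow> real \<Rightarrow> real fps" where
  "DAG w u = Abs_fps (\<lambda>n. dag_coeff n w u)"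

definition u_du_DAG :: "real \<Rightarrow> real \<Rightarrow> real fps" where
  "u_du_DAG w u = Abs_fps (\<lambda>n. u * deriv (\<lambda>v. dag_coeff n w v) u)"

end

theory Submission
  imports Defs
begin

definition dagsV :: "nat set \<Rightarrow> (nat \<times> nat) set set" where
  "dagsV V = {E. E \<subseteq> V \<times> V \<and> acyclic E}"

definition srcV :: "nat set \<Rightarrow> (nat \<times> nat) set \<Rightarrow> nat set" where
  "srcV V E = {v \<in> V. \<forall>x. (x, v) \<notin> E}"

definition dw :: "real \<Rightarrow> nat set \<Rightarrow> real" where
  "dw w V = (\<Sum>E\<in>dagsV V. w ^ card E)"

lemma finite_dagsV: "finite V \<Longrightarrow> finite (dagsV V)"
  unfolding dagsV_def by (rule finite_subset[of _ "Pow (V \<times> V)"]) auto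

lemma trancl_map:
  assumes "(a, b) \<in> R\<^sup>+"
  shows "(h a, h b) \<in> (map_prod h h ` R)\<^sup>+"
  using assms
proof (induction rule: trancl_induct)
  case (base y)
  then show ?case by (intro r_into_trancl) (auto intro: image_eqI[where x="(a,y)"])
next
  case (step y z)
  have "(h y, h z) \<in> map_prod h h ` R" using step by (auto intro: image_eqI[where x="(y,z)"])
  then show ?case by (rule trancl_into_trancl[OF step.IH])
qed

lemma acyclic_map_back: "acyclic (map_prod h h ` R) \<Longrightarrow> acyclic R"
  unfolding acyclic_def using trancl_map by fastforce

lemma dw_bij:
  assumes "bij_betw f V V'"
  shows "dw w V = dw w V'"
proof -
  define g where "g = inv_into V f"
  have bg: "bij_betw g V' V" using assms g_def bij_betw_inv_into by blast
  have gf: "\<And>x. x \<in> V \<Longrightarrow> g (f x) = x" using assms g_def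
    by (simp add: bij_betw_inv_into_left)
  have fg: "\<And>x. x \<in> V' \<Longrightarrow> f (g x) = x" using assms g_def
    by (simp add: bij_betw_inv_into_right)
  have fV: "\<And>x. x \<in> V \<Longrightarrow> f x \<in> V'" using assms bij_betwE by blast
  have gV: "\<And>x. x \<in> V' \<Longrightarrow> g x \<in> V" using bg bij_betwE by blast
  define Phi where "Phi E = map_prod f f ` E" for E
  define Psi where "Psi E = map_prod g g ` E" for E
  have PsiPhi: "Psi (Phi E) = E" if "E \<subseteq> V \<times> V" for E
  proof -
    have "Psi (Phi E) = (map_prod g g \<circ> map_prod f f) ` E" unfolding Psi_def Phi_def image_comp ..
    also have "\<dots> = id ` E" using that gf by (intro image_cong) auto
    finally show ?thesis by simp
  qed
  have PhiPsi: "Phi (Psi E) = E" if "E \<subseteq> V' \<times> V'" for E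
  proof -
    have "Phi (Psi E) = (map_prod f f \<circ> map_prod g g) ` E" unfolding Psi_def Phi_def image_comp ..
    also have "\<dots> = id ` E" using that fg by (intro image_cong) auto
    finally show ?thesis by simp
  qed
  have b: "bij_betw Phi (dagsV V) (dagsV V')"
  proof (rule bij_betw_byWitness[where f'=Psi])
    show "\<forall>a\<in>dagsV V. Psi (Phi a) = a" using PsiPhi unfolding dagsV_def by auto
    show "\<forall>a\<in>dagsV V'. Phi (Psi a) = a" using PhiPsi unfolding dagsV_def by auto
    show "Phi ` dagsV V \<subseteq> dagsV V'"
    proof
      fix E' assume "E' \<in> Phi ` dagsV V"
      then obtain E where E: "E \<in> dagsV V" "E' = Phi E" by auto
      have "E' \<subseteq> V' \<times> V'" using E fV unfolding dagsV_def Phi_def by auto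
      moreover have "acyclic E'"
      proof -
        have "Psi E' = E" using E PsiPhi[of E] unfolding dagsV_def by simp
        then have "acyclic (Psi E')" using E(1) unfolding dagsV_def by simp
        then show ?thesis unfolding Psi_def by (rule acyclic_map_back)
      qed
      ultimately show "E' \<in> dagsV V'" unfolding dagsV_def by auto
    qed
    show "Psi ` dagsV V' \<subseteq> dagsV V"
    proof
      fix E' assume "E' \<in> Psi ` dagsV V'"
      then obtain E where E: "E \<in> dagsV V'" "E' = Psi E" by auto
      have "E' \<subseteq> V \<times> V" using E gV unfolding dagsV_def Psi_def by auto
      moreover have "acyclic E'"
      proof -
        have "Phi E' = E" using E PhiPsi[of E] unfolding dagsV_def by simp
        then have "acyclic (Phi E')" using E(1) unfolding dagsV_def by simp
        then show ?thesis unfolding Phi_def by (rule acyclic_map_back)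
      qed
      ultimately show "E' \<in> dagsV V" unfolding dagsV_def by auto
    qed
  qed
  have card: "card (Phi E) = card E" if "E \<in> dagsV V" for E
  proof -
    have "inj_on f V" using assms bij_betw_def by blast
    then have "inj_on (map_prod f f) (V \<times> V)" by (intro map_prod_inj_on)
    then have "inj_on (map_prod f f) E" using that unfolding dagsV_def
      by (auto intro: inj_on_subset)
    then show ?thesis unfolding Phi_def by (rule card_image)
  qed
  have "dw w V = (\<Sum>E\<in>dagsV V. w ^ card (Phi E))" unfolding dw_def using card by simp
  also have "\<dots> = dw w V'" unfolding dw_def by (rule sum.reindex_bij_betw[OF b])
  finally show ?thesis .
qed

lemma dw_card: "finite V \<Longrightarrow> dw w V = dw w {1..card V}"
  using finite_same_card_bij[of V "{1..card V}"] dw_bij by fastforce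

lemma trancl_split:
  assumes "(x, y) \<in> (E' \<union> F)\<^sup>+" "E' \<subseteq> T \<times> T" "F \<subseteq> S \<times> T" "S \<inter> T = {}"
  shows "(x, y) \<in> E'\<^sup>+ \<or> (x \<in> S \<and> y \<in> T)"
  using assms(1)
proof (induction rule: trancl_induct)
  case (base y)
  then show ?case using assms(3) by auto
next
  case (step y z)
  have ET: "E'\<^sup>+ \<subseteq> T \<times> T" using assms(2) by (rule trancl_subset_Sigma)
  from step.hyps(2) show ?case
  proof
    assume yz: "(y, z) \<in> E'"
    then have "z \<in> T" using assms(2) by auto
    with step.IH yz show ?thesis by (auto intro: trancl_into_trancl)
  next
    assume "(y, z) \<in> F"
    then have "y \<in> S" using assms(3) by auto
    moreover have "y \<in> T" using step.IH ET by auto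
    ultimately show ?thesis using assms(4) by auto
  qed
qed

lemma acyclic_split:
  assumes "acyclic E'" "E' \<subseteq> T \<times> T" "F \<subseteq> S \<times> T" "S \<inter> T = {}"
  shows "acyclic (E' \<union> F)"
  unfolding acyclic_def
proof
  fix x show "(x, x) \<notin> (E' \<union> F)\<^sup>+"
  proof
    assume "(x, x) \<in> (E' \<union> F)\<^sup>+"
    from trancl_split[OF this assms(2-4)] assms(1,4) show False
      unfolding acyclic_def by auto
  qed
qed

lemma sum_pow_card: "finite A \<Longrightarrow> (\<Sum>F\<in>Pow A. (w::real) ^ card F) = (1 + w) ^ card A"
  using prod_add[of A "\<lambda>_. w" "\<lambda>_. 1"] by (simp add: add.commute)

lemma decomp:
  assumes V: "finite V" and SV: "S \<subseteq> V"
  shows "(\<Sum>E\<in>{E\<in>dagsV V. S \<subseteq> srcV V E}. (w::real) ^ card E)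
         = (1 + w) ^ (card S * card (V - S)) * dw w (V - S)"
proof -
  define T where "T = V - S"
  have ST: "S \<inter> T = {}" unfolding T_def by auto
  have VST: "V = S \<union> T" unfolding T_def using SV by auto
  have fT: "finite T" "finite S" using V SV T_def finite_subset by auto
  define phi where "phi p = fst p \<union> snd p" for p :: "(nat \<times> nat) set \<times> (nat \<times> nat) set"
  let ?D = "dagsV T \<times> Pow (S \<times> T)"
  have inj: "inj_on phi ?D"
  proof (rule inj_onI)
    fix p q assume p: "p \<in> ?D" and q: "q \<in> ?D" and eq: "phi p = phi q"
    have "fst p = phi p \<inter> (T \<times> T)" "snd p = phi p \<inter> (S \<times> T)"
      using p ST unfolding phi_def dagsV_def by auto
    moreover have "fst q = phi q \<inter> (T \<times> T)" "snd q = phi q \<inter> (S \<times> T)"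
      using q ST unfolding phi_def dagsV_def by auto
    ultimately show "p = q" using eq by (simp add: prod_eq_iff)
  qed
  have img: "phi ` ?D = {E\<in>dagsV V. S \<subseteq> srcV V E}"
  proof
    show "phi ` ?D \<subseteq> {E\<in>dagsV V. S \<subseteq> srcV V E}"
    proof
      fix E assume "E \<in> phi ` ?D"
      then obtain E' F where E': "E' \<in> dagsV T" and F: "F \<subseteq> S \<times> T" and E: "E = E' \<union> F"
        unfolding phi_def by auto
      have a: "acyclic E" using E' F ST acyclic_split[of E' T F S] E unfolding dagsV_def by auto
      have b: "E \<subseteq> V \<times> V" using E' F E VST unfolding dagsV_def by auto
      have c: "S \<subseteq> srcV V E" using E' F E ST SV unfolding dagsV_def srcV_def by auto
      show "E \<in> {E\<in>dagsV V. S \<subseteq> srcV V E}" using a b c unfolding dagsV_def by auto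
    qed
  next
    show "{E\<in>dagsV V. S \<subseteq> srcV V E} \<subseteq> phi ` ?D"
    proof
      fix E assume E: "E \<in> {E\<in>dagsV V. S \<subseteq> srcV V E}"
      then have EV: "E \<subseteq> V \<times> V" and ac: "acyclic E" and src: "S \<subseteq> srcV V E"
        unfolding dagsV_def by auto
      have split: "E = (E \<inter> (T \<times> T)) \<union> (E \<inter> (S \<times> T))"
      proof -
        have "snd p \<in> T" if "p \<in> E" for p
          using that EV src VST unfolding srcV_def by (cases p) auto
        then show ?thesis using EV VST by auto
      qed
      have D: "(E \<inter> (T \<times> T), E \<inter> (S \<times> T)) \<in> ?D"
        using ac unfolding dagsV_def by (auto intro: acyclic_subset)
      have "E = phi (E \<inter> (T \<times> T), E \<inter> (S \<times> T))" using split unfolding phi_def by simp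
      from this D show "E \<in> phi ` ?D" by (rule image_eqI)
    qed
  qed
  have fD: "finite (dagsV T)" using fT finite_dagsV by auto
  have "(\<Sum>E\<in>{E\<in>dagsV V. S \<subseteq> srcV V E}. w ^ card E) = (\<Sum>p\<in>?D. w ^ card (phi p))"
    using sum.reindex[OF inj, of "\<lambda>E. w ^ card E"] img by simp
  also have "\<dots> = (\<Sum>p\<in>?D. w ^ card (fst p) * w ^ card (snd p))"
  proof (rule sum.cong)
    fix p assume p: "p \<in> ?D"
    have sub: "fst p \<subseteq> T \<times> T" "snd p \<subseteq> S \<times> T" using p unfolding dagsV_def by auto
    have fin: "finite (fst p)" "finite (snd p)"
      using sub(1) fT finite_subset finite_cartesian_product apply metis
      using sub(2) fT finite_subset finite_cartesian_product by metis
    have "fst p \<inter> snd p = {}" using sub ST by blast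
    then have "card (phi p) = card (fst p) + card (snd p)"
      unfolding phi_def using fin by (simp add: card_Un_disjoint)
    then show "w ^ card (phi p) = w ^ card (fst p) * w ^ card (snd p)" by (simp add: power_add)
  qed simp
  also have "\<dots> = dw w T * (\<Sum>F\<in>Pow (S \<times> T). w ^ card F)"
    unfolding dw_def sum_product sum.cartesian_product by (simp add: case_prod_unfold)
  also have "\<dots> = dw w T * (1 + w) ^ (card S * card T)"
    using fT by (simp add: sum_pow_card card_cartesian_product)
  finally show ?thesis unfolding T_def by simp
qed

lemma dags_eq: "dags n = dagsV {1..n}" unfolding dags_def dagsV_def ..
lemma sources_eq: "sources n E = srcV {1..n} E" unfolding sources_def srcV_def ..

lemma pow_as_sum:
  assumes "finite A"
  shows "(u::real) ^ card A = (\<Sum>S\<in>Pow A. (u - 1) ^ card S)"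
  using prod_add[OF assms, of "\<lambda>_. u - 1" "\<lambda>_. 1"] by simp

lemma sum_Pow_by_card:
  assumes "finite V"
  shows "(\<Sum>S\<in>Pow V. h (card S)) = (\<Sum>k\<le>card V. of_nat (card V choose k) * (h k :: real))"
proof -
  have "(\<Sum>S\<in>Pow V. h (card S)) = (\<Sum>k\<in>{..card V}. \<Sum>S\<in>{S. S \<in> Pow V \<and> card S = k}. h (card S))"
    using assms by (intro sum.group[symmetric]) (auto intro: card_mono)
  also have "\<dots> = (\<Sum>k\<le>card V. of_nat (card V choose k) * h k)"
  proof (rule sum.cong)
    fix k assume "k \<in> {..card V}"
    have "(\<Sum>S\<in>{S. S \<in> Pow V \<and> card S = k}. h (card S)) = (\<Sum>S\<in>{S. S \<in> Pow V \<and> card S = k}. h k)"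
      by (rule sum.cong) auto
    also have "\<dots> = of_nat (card {S. S \<subseteq> V \<and> card S = k}) * h k" by simp
    also have "\<dots> = of_nat (card V choose k) * h k" using n_subsets[OF assms] by simp
    finally show "(\<Sum>S\<in>{S. S \<in> Pow V \<and> card S = k}. h (card S)) = of_nat (card V choose k) * h k" .
  qed simp
  finally show ?thesis .
qed

lemma main_sum:
  "(\<Sum>E\<in>dags n. (w::real) ^ card E * u ^ card (sources n E))
   = (\<Sum>k\<le>n. of_nat (n choose k) * ((u - 1) ^ k * ((1 + w) ^ (k * (n - k)) * dw w {1..n-k})))"
proof -
  define V where "V = {1..n}"
  have fV: "finite V" and cV: "card V = n" unfolding V_def by auto
  have fD: "finite (dagsV V)" using fV by (rule finite_dagsV)
  have fsrc: "finite (srcV V E)" for E using fV unfolding srcV_def by auto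
  have "(\<Sum>E\<in>dags n. w ^ card E * u ^ card (sources n E))
      = (\<Sum>E\<in>dagsV V. w ^ card E * u ^ card (srcV V E))"
    unfolding dags_eq sources_eq V_def ..
  also have "\<dots> = (\<Sum>E\<in>dagsV V. \<Sum>S\<in>{S \<in> Pow V. S \<subseteq> srcV V E}. w ^ card E * (u - 1) ^ card S)"
  proof (rule sum.cong)
    fix E assume "E \<in> dagsV V"
    have "Pow (srcV V E) = {S \<in> Pow V. S \<subseteq> srcV V E}" unfolding srcV_def by auto
    then show "w ^ card E * u ^ card (srcV V E) = (\<Sum>S\<in>{S \<in> Pow V. S \<subseteq> srcV V E}. w ^ card E * (u - 1) ^ card S)"
      using pow_as_sum[OF fsrc[of E], of u] by (simp add: sum_distrib_left)
  qed simp
  also have "\<dots> = (\<Sum>S\<in>Pow V. \<Sum>E\<in>{E \<in> dagsV V. S \<subseteq> srcV V E}. w ^ card E * (u - 1) ^ card S)"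
    using fD fV by (intro sum.swap_restrict) auto
  also have "\<dots> = (\<Sum>S\<in>Pow V. (u - 1) ^ card S * ((1 + w) ^ (card S * (n - card S)) * dw w {1..n - card S}))"
  proof (rule sum.cong)
    fix S assume S: "S \<in> Pow V"
    then have SV: "S \<subseteq> V" by auto
    have cd: "card (V - S) = n - card S" using SV fV cV by (simp add: card_Diff_subset finite_subset)
    have "(\<Sum>E\<in>{E \<in> dagsV V. S \<subseteq> srcV V E}. w ^ card E * (u - 1) ^ card S)
        = (\<Sum>E\<in>{E \<in> dagsV V. S \<subseteq> srcV V E}. w ^ card E) * (u - 1) ^ card S"
      by (simp add: sum_distrib_right)
    also have "\<dots> = (1 + w) ^ (card S * card (V - S)) * dw w (V - S) * (u - 1) ^ card S"
      using decomp[OF fV SV, of w] by simp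
    also have "dw w (V - S) = dw w {1..n - card S}" using dw_card[of "V - S" w] fV cd by simp
    finally show "(\<Sum>E\<in>{E \<in> dagsV V. S \<subseteq> srcV V E}. w ^ card E * (u - 1) ^ card S)
        = (u - 1) ^ card S * ((1 + w) ^ (card S * (n - card S)) * dw w {1..n - card S})"
      using cd by simp
  qed simp
  also have "\<dots> = (\<Sum>k\<le>n. of_nat (n choose k) * ((u - 1) ^ k * ((1 + w) ^ (k * (n - k)) * dw w {1..n-k})))"
    using sum_Pow_by_card[OF fV, of "\<lambda>k. (u - 1) ^ k * ((1 + w) ^ (k * (n - k)) * dw w {1..n - k})"] cV
    by simp
  finally show ?thesis .
qed

lemma choose2_add: "(k + m) choose 2 = (k choose 2) + (m choose 2) + k * m"
  by (induction m) (simp_all add: numeral_2_eq_2)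

lemma dag_coeff_one: "dag_coeff m w 1 = dw w {1..m} / ((1 + w) ^ (m choose 2) * fact m)"
  unfolding dag_coeff_def dw_def dags_eq by simp

lemma dag_coeff_expand:
  assumes w: "(w::real) > 0"
  shows "dag_coeff n w u = (\<Sum>k\<le>n. ((u - 1) ^ k / ((1 + w) ^ (k choose 2) * fact k)) * dag_coeff (n - k) w 1)"
proof -
  have "dag_coeff n w u = (\<Sum>k\<le>n. of_nat (n choose k) * ((u - 1) ^ k * ((1 + w) ^ (k * (n - k)) * dw w {1..n-k})))
          / ((1 + w) ^ (n choose 2) * fact n)"
    unfolding dag_coeff_def main_sum ..
  also have "\<dots> = (\<Sum>k\<le>n. of_nat (n choose k) * ((u - 1) ^ k * ((1 + w) ^ (k * (n - k)) * dw w {1..n-k}))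
          / ((1 + w) ^ (n choose 2) * fact n))"
    by (rule sum_divide_distrib)
  also have "\<dots> = (\<Sum>k\<le>n. ((u - 1) ^ k / ((1 + w) ^ (k choose 2) * fact k)) * dag_coeff (n - k) w 1)"
  proof (rule sum.cong)
    fix k assume "k \<in> {..n}"
    then obtain m where n: "n = k + m" by (auto simp: le_iff_add)
    have f: "fact k * fact m * real (n choose k) = fact n"
      using binomial_fact_lemma[of k n] n by (metis add_diff_cancel_left' le_add1 of_nat_fact of_nat_mult)
    have b: "(1 + w) ^ (n choose 2) = (1 + w) ^ (k choose 2) * (1 + w) ^ (m choose 2) * (1 + w) ^ (k * m)"
      unfolding n choose2_add by (simp add: power_add)
    have pos: "(1 + w) ^ j > 0" for j using w by simp
    have fpos: "fact j > (0::real)" for j by simp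
    show "of_nat (n choose k) * ((u - 1) ^ k * ((1 + w) ^ (k * (n - k)) * dw w {1..n-k}))
          / ((1 + w) ^ (n choose 2) * fact n)
        = ((u - 1) ^ k / ((1 + w) ^ (k choose 2) * fact k)) * dag_coeff (n - k) w 1"
      unfolding dag_coeff_one b f[symmetric] using n pos[of "k choose 2"] pos[of "m choose 2"] pos[of "k*m"]
        fpos[of k] fpos[of m] w
      by (simp add: field_simps)
  qed simp
  finally show ?thesis .
qed

lemma has_source:
  assumes "n \<ge> 1" "E \<in> dags n"
  shows "card (sources n E) > 0"
proof -
  have EV: "E \<subseteq> {1..n} \<times> {1..n}" and ac: "acyclic E" using assms(2) unfolding dags_def by auto
  have "finite E" using EV by (rule finite_subset) auto
  then have wf: "wf E" using ac by (rule finite_acyclic_wf)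
  have "(1::nat) \<in> {1..n}" using assms(1) by simp
  then obtain z where z: "z \<in> {1..n}" "\<And>y. (y, z) \<in> E \<Longrightarrow> y \<notin> {1..n}"
    using wfE_min[OF wf] by metis
  have "\<forall>x. (x, z) \<notin> E"
  proof (intro allI notI)
    fix x assume xz: "(x, z) \<in> E"
    then have "x \<in> {1..n}" using EV by blast
    with z(2)[OF xz] show False by blast
  qed
  then have "z \<in> sources n E" unfolding sources_def using z(1) by auto
  moreover have "finite (sources n E)" unfolding sources_def by auto
  ultimately show ?thesis by (auto simp: card_gt_0_iff)
qed

lemma dag_coeff_zero: "dag_coeff n w 0 = (if n = 0 then 1 else 0)"
proof (cases "n = 0")
  case True
  have "dags 0 = {{}}" unfolding dags_def acyclic_def by auto
  then show ?thesis using True unfolding dag_coeff_def sources_def by (simp add: numeral_2_eq_2)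
next
  case False
  then have "\<And>E. E \<in> dags n \<Longrightarrow> w ^ card E * (0::real) ^ card (sources n E) = 0"
    using has_source[of n] by simp
  then have "(\<Sum>E\<in>dags n. w ^ card E * (0::real) ^ card (sources n E)) = 0"
    by (rule sum.neutral[rule_format]) 
  then show ?thesis using False unfolding dag_coeff_def by simp
qed

definition SS :: "real \<Rightarrow> real \<Rightarrow> real fps" where
  "SS w a = Abs_fps (\<lambda>k. a ^ k / ((1 + w) ^ (k choose 2) * fact k))"

lemma DAG_nth: "fps_nth (DAG w u) n = dag_coeff n w u" unfolding DAG_def by simp

lemma L1:
  assumes "(w::real) > 0"
  shows "DAG w u = SS w (u - 1) * DAG w 1"
proof (rule fps_ext)
  fix n
  show "fps_nth (DAG w u) n = fps_nth (SS w (u - 1) * DAG w 1) n"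
    unfolding fps_mult_nth DAG_nth dag_coeff_expand[OF assms, of n u] atMost_atLeast0
    by (simp add: SS_def)
qed

lemma L2:
  assumes "(w::real) > 0"
  shows "SS w (-1) * DAG w 1 = 1"
proof -
  have "DAG w 0 = 1" unfolding fps_eq_iff DAG_nth dag_coeff_zero by simp
  then show ?thesis using L1[OF assms, of 0] by simp
qed

lemma L3: "SS w a oo (fps_const c * fps_X) = SS w (c * a)"
  unfolding fps_compose_linear SS_def fps_eq_iff by (simp add: power_mult_distrib)

lemma alg: "(r::real) \<noteq> 0 \<Longrightarrow> b \<noteq> 0 \<Longrightarrow> r * x ^ j * (a / (b ^ j * r) * B) = (x / b) ^ j * a * B"
  by (simp add: power_divide field_simps)

lemma L5:
  assumes w: "(w::real) > 0"
  shows "u_du_DAG w u = fps_const u * fps_X * SS w ((u - 1) / (1 + w)) * DAG w 1"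
proof -
  define A where "A k = 1 / ((1 + w) ^ (k choose 2) * fact k)" for k
  define B where "B m = dag_coeff m w 1" for m
  have expand: "dag_coeff n w v = (\<Sum>k\<le>n. (v - 1) ^ k * (A k * B (n - k)))" for n v
    unfolding dag_coeff_expand[OF w, of n v] A_def B_def by (intro sum.cong) auto
  have der: "deriv (\<lambda>v. dag_coeff n w v) u = (\<Sum>k\<le>n. of_nat k * (u - 1) ^ (k - 1) * (A k * B (n - k)))" for n
  proof -
    have "((\<lambda>v. \<Sum>k\<le>n. (v - 1) ^ k * (A k * B (n - k))) has_real_derivative
          (\<Sum>k\<le>n. of_nat k * (u - 1) ^ (k - 1) * (A k * B (n - k)))) (at u)"
      by (auto intro!: derivative_eq_intros)
    then show ?thesis unfolding expand by (rule DERIV_imp_deriv)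
  qed
  have nz: "1 + w \<noteq> 0" using w by simp
  show ?thesis
  proof (rule fps_ext)
    fix n
    have lhs: "fps_nth (u_du_DAG w u) n = u * (\<Sum>k\<le>n. of_nat k * (u - 1) ^ (k - 1) * (A k * B (n - k)))"
      unfolding u_du_DAG_def der by simp
    have rhs: "fps_nth (fps_const u * fps_X * SS w ((u - 1) / (1 + w)) * DAG w 1) n
        = u * fps_nth (fps_X * (SS w ((u - 1) / (1 + w)) * DAG w 1)) n"
      by (simp add: mult.assoc)
    show "fps_nth (u_du_DAG w u) n = fps_nth (fps_const u * fps_X * SS w ((u - 1) / (1 + w)) * DAG w 1) n"
    proof (cases n)
      case 0
      then show ?thesis unfolding lhs rhs by simp
    next
      case (Suc m)
      have "(\<Sum>k\<le>n. of_nat k * (u - 1) ^ (k - 1) * (A k * B (n - k)))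
          = (\<Sum>j\<le>m. of_nat (Suc j) * (u - 1) ^ j * (A (Suc j) * B (m - j)))"
        unfolding Suc sum.atMost_Suc_shift by simp
      also have "\<dots> = (\<Sum>j\<le>m. fps_nth (SS w ((u - 1) / (1 + w))) j * fps_nth (DAG w 1) (m - j))"
      proof (rule sum.cong)
        fix j assume "j \<in> {..m}"
        have c: "Suc j choose 2 = (j choose 2) + j"
          by (simp add: numeral_2_eq_2)
        have pos: "(1 + w) ^ i > 0" for i using w by simp
        have fpos: "fact j > (0::real)" by simp
        have S: "fps_nth (SS w ((u - 1) / (1 + w))) j = ((u - 1) / (1 + w)) ^ j * A j"
          unfolding SS_def A_def by simp
        have jnz: "1 + real j \<noteq> 0" "real (Suc j) \<noteq> 0" by linarith+
        have Aj: "A (Suc j) = A j / ((1 + w) ^ j * real (Suc j))"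
          unfolding A_def c using pos[of "j choose 2"] pos[of j] fpos jnz
          by (simp add: power_add fact_Suc field_simps)
        show "of_nat (Suc j) * (u - 1) ^ j * (A (Suc j) * B (m - j))
            = fps_nth (SS w ((u - 1) / (1 + w))) j * fps_nth (DAG w 1) (m - j)"
          unfolding S DAG_nth B_def[symmetric] Aj
          using alg[OF jnz(2) nz] .
      qed simp
      finally have calc: "(\<Sum>k\<le>n. of_nat k * (u - 1) ^ (k - 1) * (A k * B (n - k)))
          = (\<Sum>j\<le>m. fps_nth (SS w ((u - 1) / (1 + w))) j * fps_nth (DAG w 1) (m - j))" .
      have X: "fps_nth (fps_X * (SS w ((u - 1) / (1 + w)) * DAG w 1)) n
          = (\<Sum>j\<le>m. fps_nth (SS w ((u - 1) / (1 + w))) j * fps_nth (DAG w 1) (m - j))"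
        unfolding Suc fps_X_mult_nth by (simp add: fps_mult_nth atMost_atLeast0)
      show ?thesis unfolding lhs rhs X calc ..
    qed
  qed
qed

theorem theorem2:
  fixes w u :: real
  assumes "w > 0"
  shows "u_du_DAG w u =
           fps_const u * fps_X
           * (DAG w u oo (fps_const (1 / (1 + w)) * fps_X))
           * DAG w (w / (1 + w))"
proof -
  define c where "c = 1 / (1 + w)"
  define D1 where "D1 = DAG w 1"
  define cX where "cX = fps_const c * fps_X"
  have cX0: "fps_nth cX 0 = 0" unfolding cX_def by simp
  have nz: "1 + w \<noteq> 0" using assms by simp
  have a: "DAG w u oo cX = SS w (c * (u - 1)) * (D1 oo cX)"
  proof -
    have "DAG w u oo cX = (SS w (u - 1) oo cX) * (D1 oo cX)"
      unfolding L1[OF assms, of u] D1_def by (rule fps_compose_mult_distrib[OF cX0])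
    also have "SS w (u - 1) oo cX = SS w (c * (u - 1))" unfolding cX_def L3 ..
    finally show ?thesis .
  qed
  have b: "DAG w (w / (1 + w)) = SS w (- c) * D1"
  proof -
    have "w / (1 + w) - 1 = - c" unfolding c_def using nz by (simp add: field_simps)
    then show ?thesis unfolding L1[OF assms, of "w / (1 + w)"] D1_def by simp
  qed
  have one: "(D1 oo cX) * SS w (- c) = 1"
  proof -
    have "SS w (- c) = SS w (-1) oo cX" unfolding cX_def L3 by simp
    then have "(D1 oo cX) * SS w (- c) = (D1 * SS w (-1)) oo cX"
      by (simp add: fps_compose_mult_distrib[OF cX0])
    also have "\<dots> = 1" using L2[OF assms] unfolding D1_def by (simp add: mult.commute)
    finally show ?thesis .
  qed
  have "fps_const u * fps_X * (DAG w u oo cX) * DAG w (w / (1 + w))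
      = fps_const u * fps_X * SS w (c * (u - 1)) * ((D1 oo cX) * SS w (- c)) * D1"
    unfolding a b by (simp add: ac_simps)
  also have "\<dots> = fps_const u * fps_X * SS w ((u - 1) / (1 + w)) * D1"
    unfolding one by (simp add: c_def)
  also have "\<dots> = u_du_DAG w u" unfolding D1_def L5[OF assms] ..
  finally show ?thesis unfolding cX_def c_def by simp
qed

end
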